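(* Let $T$ be a finite rooted tree with a self-loop at the root and $|T|\ge2$, let $v$ be a vertex of $T$ (possibly the root) and $T(v)$ the subtree of descendants of $v$. For $t\in\mathbb N$ let $N_t$ be the number of visits to $T(v)$ during $t$ steps of simple random walk on $T$. Then \[ E_v[N_t]\le |T(v)|\Big[\frac{t+3}{|T|-1}+48|T|\Big]. \]
   Context: Degrees count the self-loop twice; simple random walk moves from a vertex along a uniformly chosen edge-end; $E_v$ is expectation for the walk started at $v$. The descendants of $v$ are the vertices farther from the root than $v$ whose unique path to the root contains $v$; $T(v)$ consists of $v$ and its descendants. $|\cdot|$ is the number of vertices. *)

theory Defs
  imports "HOL-Probability.Probability"
begin

text \<open>A finite graph on vertex set V with symmetric, irreflexive edge relation E
  (the tree edges; the root self-loop is handled separately in the walk).\<close>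

definition simple_path :: "('a \<Rightarrow> 'a \<Rightarrow> bool) \<Rightarrow> 'a list \<Rightarrow> 'a \<Rightarrow> 'a \<Rightarrow> bool" where
  "simple_path E p x y \<longleftrightarrow> p \<noteq> [] \<and> hd p = x \<and> last p = y \<and> distinct p \<and>
     (\<forall>i. Suc i < length p \<longrightarrow> E (p ! i) (p ! Suc i))"

definition is_tree :: "'a set \<Rightarrow> ('a \<Rightarrow> 'a \<Rightarrow> bool) \<Rightarrow> bool" where
  "is_tree V E \<longleftrightarrow> finite V \<and> V \<noteq> {} \<and>
     (\<forall>x y. E x y \<longrightarrow> x \<in> V \<and> y \<in> V) \<and>
     (\<forall>x y. E x y \<longrightarrow> E y x) \<and> (\<forall>x. \<not> E x x) \<and>
     (\<forall>x\<in>V. \<forall>y\<in>V. \<exists>!p. simple_path E p x y)"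

definition subtree :: "'a set \<Rightarrow> ('a \<Rightarrow> 'a \<Rightarrow> bool) \<Rightarrow> 'a \<Rightarrow> 'a \<Rightarrow> 'a set" where
  "subtree V E r v = {w \<in> V. \<forall>p. simple_path E p w r \<longrightarrow> v \<in> set p}"

text \<open>Edge-ends at x, as a multiset of endpoints; the root carries a self-loop,
  which contributes two edge-ends (degree counts the loop twice).\<close>
definition edge_ends :: "'a set \<Rightarrow> ('a \<Rightarrow> 'a \<Rightarrow> bool) \<Rightarrow> 'a \<Rightarrow> 'a \<Rightarrow> 'a multiset" where
  "edge_ends V E r x = mset_set {y \<in> V. E x y} + (if x = r then {#r, r#} else {#})"

definition srw_step :: "'a set \<Rightarrow> ('a \<Rightarrow> 'a \<Rightarrow> bool) \<Rightarrow> 'a \<Rightarrow> 'a \<Rightarrow> 'a pmf" where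
  "srw_step V E r x = pmf_of_multiset (edge_ends V E r x)"

fun srw_traj :: "'a set \<Rightarrow> ('a \<Rightarrow> 'a \<Rightarrow> bool) \<Rightarrow> 'a \<Rightarrow> nat \<Rightarrow> 'a \<Rightarrow> 'a list pmf" where
  "srw_traj V E r 0 x = return_pmf [x]"
| "srw_traj V E r (Suc n) x =
     bind_pmf (srw_step V E r x) (\<lambda>y. map_pmf (\<lambda>p. x # p) (srw_traj V E r n y))"

definition expected_visits :: "'a set \<Rightarrow> ('a \<Rightarrow> 'a \<Rightarrow> bool) \<Rightarrow> 'a \<Rightarrow> 'a \<Rightarrow> nat \<Rightarrow> real" where
  "expected_visits V E r v t =
     measure_pmf.expectation (srw_traj V E r t v)
       (\<lambda>p. real (length (filter (\<lambda>w. w \<in> subtree V E r v) p)))"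

end

theory Submission imports Defs begin

locale tr =
  fixes V :: "'a set" and E :: "'a \<Rightarrow> 'a \<Rightarrow> bool" and r :: 'a
  assumes tree: "is_tree V E" and rV: "r \<in> V"
begin

lemma finV: "finite V" using tree unfolding is_tree_def by auto
lemma EV: "E x y \<Longrightarrow> x \<in> V \<and> y \<in> V" using tree unfolding is_tree_def by blast
lemma Esym: "E x y \<Longrightarrow> E y x" using tree unfolding is_tree_def by blast
lemma Eirr: "\<not> E x x" using tree unfolding is_tree_def by blast
lemma uniq: "x \<in> V \<Longrightarrow> y \<in> V \<Longrightarrow> \<exists>!p. simple_path E p x y" using tree unfolding is_tree_def by blast

definition tp where "tp x y = (THE p. simple_path E p x y)"
definition td where "td x y = length (tp x y) - 1"

lemma tp: "x \<in> V \<Longrightarrow> y \<in> V \<Longrightarrow> simple_path E (tp x y) x y"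
  unfolding tp_def by (rule theI'[OF uniq])
lemma tp_eq: "x \<in> V \<Longrightarrow> y \<in> V \<Longrightarrow> simple_path E p x y \<Longrightarrow> tp x y = p"
  unfolding tp_def by (rule the1_equality[OF uniq])

lemma sp_set: assumes "simple_path E p x y" "x \<in> V" shows "set p \<subseteq> V"
proof
  fix w assume "w \<in> set p"
  then obtain i where i: "i < length p" "p ! i = w" by (auto simp: in_set_conv_nth)
  show "w \<in> V"
  proof (cases i)
    case 0
    have "hd p = x" "p \<noteq> []" using assms by (simp_all add: simple_path_def)
    then have "w = x" using i 0 by (simp add: hd_conv_nth)
    then show ?thesis using assms by simp
  next
    case (Suc j)
    then have "E (p ! j) (p ! Suc j)" using assms i unfolding simple_path_def by blast
    then show ?thesis using EV i Suc by blast
  qed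
qed

lemma sp_len: "simple_path E p x y \<Longrightarrow> x \<in> V \<Longrightarrow> length p \<le> card V"
proof -
  assume a: "simple_path E p x y" "x \<in> V"
  have "length p = card (set p)" using a by (simp add: simple_path_def distinct_card)
  also have "\<dots> \<le> card V" using sp_set[OF a] finV by (rule card_mono[rotated])
  finally show ?thesis .
qed

lemma dist_le: "x \<in> V \<Longrightarrow> y \<in> V \<Longrightarrow> td x y \<le> card V - 1"
  unfolding td_def using sp_len[OF tp] diff_le_mono by blast

lemma tp_ne: "x \<in> V \<Longrightarrow> y \<in> V \<Longrightarrow> tp x y \<noteq> []" using tp[of x y] by (simp add: simple_path_def)

lemma tp_self: "x \<in> V \<Longrightarrow> tp x x = [x]"
  by (rule tp_eq) (auto simp: simple_path_def)
lemma dist_self: "x \<in> V \<Longrightarrow> td x x = 0" by (simp add: td_def tp_self)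

lemma spI: "p \<noteq> [] \<Longrightarrow> hd p = x \<Longrightarrow> last p = y \<Longrightarrow> distinct p \<Longrightarrow>
   (\<And>i. Suc i < length p \<Longrightarrow> E (p!i) (p!Suc i)) \<Longrightarrow> simple_path E p x y"
  unfolding simple_path_def by blast
lemma spD: "simple_path E p x y \<Longrightarrow> p \<noteq> [] \<and> hd p = x \<and> last p = y \<and> distinct p"
  unfolding simple_path_def by blast
lemma spE: "simple_path E p x y \<Longrightarrow> Suc i < length p \<Longrightarrow> E (p!i) (p!Suc i)"
  unfolding simple_path_def by blast

lemma sp_rev: assumes "simple_path E p x y" shows "simple_path E (rev p) y x"
proof (rule spI)
  show "rev p \<noteq> []" "hd (rev p) = y" "last (rev p) = x" "distinct (rev p)" using spD[OF assms]
    by (simp_all add: hd_rev last_rev)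
  fix i assume i: "Suc i < length (rev p)"
  define j where "j = length p - Suc (Suc i)"
  have j: "Suc j < length p" "Suc j = length p - Suc i" using i unfolding j_def by auto
  have "E (p ! j) (p ! Suc j)" using spE[OF assms j(1)] .
  then have "E (p ! Suc j) (p ! j)" by (rule Esym)
  moreover have "rev p ! i = p ! Suc j" "rev p ! Suc i = p ! j" using i j by (simp_all add: rev_nth j_def)
  ultimately show "E (rev p ! i) (rev p ! Suc i)" by simp
qed

lemma tp_rev: "x \<in> V \<Longrightarrow> y \<in> V \<Longrightarrow> tp y x = rev (tp x y)"
  by (rule tp_eq) (simp_all add: sp_rev tp)
lemma dist_sym: "x \<in> V \<Longrightarrow> y \<in> V \<Longrightarrow> td y x = td x y"
  unfolding td_def using tp_rev[of x y] by simp

lemma sp_take: assumes "simple_path E p a b" "j < length p"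
  shows "simple_path E (take (Suc j) p) a (p ! j)"
proof (rule spI)
  have d: "p \<noteq> [] \<and> hd p = a \<and> last p = b \<and> distinct p" using spD[OF assms(1)] .
  show "take (Suc j) p \<noteq> []" using d by simp
  show "hd (take (Suc j) p) = a" using d by (cases p) auto
  show "last (take (Suc j) p) = p ! j" using assms(2) by (simp add: take_Suc_conv_app_nth)
  show "distinct (take (Suc j) p)" using d by (simp add: distinct_take)
  fix i assume "Suc i < length (take (Suc j) p)"
  then show "E (take (Suc j) p ! i) (take (Suc j) p ! Suc i)" using spE[OF assms(1)] by simp
qed

lemma sp_drop: assumes "simple_path E p a b" "j < length p"
  shows "simple_path E (drop j p) (p ! j) b"
proof (rule spI)
  show "drop j p \<noteq> []" "hd (drop j p) = p ! j" "last (drop j p) = b"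
    "distinct (drop j p)" using spD[OF assms(1)] assms(2)
    by (simp_all add: hd_drop_conv_nth)
  fix i assume "Suc i < length (drop j p)"
  then show "E (drop j p ! i) (drop j p ! Suc i)" using spE[OF assms(1), of "j+i"] by simp
qed

lemma sp_set': "simple_path E p x y \<Longrightarrow> x \<in> V \<Longrightarrow> y \<in> set p" using spD[of p x y]
  by (metis last_in_set)

lemma nbr_step:
  assumes x: "x \<in> V" and z: "z \<in> V" and xz: "x \<noteq> z"
  shows "\<exists>y0. E x y0 \<and> tp x z = x # tp y0 z \<and> (\<forall>y. E x y \<and> y \<noteq> y0 \<longrightarrow> tp y z = y # tp x z)"
proof -
  define p where "p = tp x z"
  have sp: "simple_path E p x z" using tp x z p_def by simp
  have pd: "p \<noteq> []" "hd p = x" "last p = z" "distinct p" using spD[OF sp] by auto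
  have len: "Suc 1 \<le> length p"
  proof (rule ccontr)
    assume "\<not> ?thesis"
    moreover have "length p \<noteq> 0" using pd by simp
    ultimately have "length p = 1" by linarith
    then have "p = [x]" using pd by (cases p) auto
    then show False using pd xz by simp
  qed
  define y0 where "y0 = p ! 1"
  have p0: "p ! 0 = x" using pd by (simp add: hd_conv_nth)
  have Exy0: "E x y0" using spE[OF sp, of 0] len p0 unfolding y0_def by simp
  have y0V: "y0 \<in> V" using EV Exy0 by blast
  have dp: "drop 1 p = tl p" by (simp add: drop_Suc)
  have "simple_path E (tl p) y0 z" using sp_drop[OF sp, of 1] len dp unfolding y0_def by simp
  then have t0: "tp y0 z = tl p" using tp_eq y0V z by blast
  have pcons: "p = x # tl p" using pd by (cases p) auto
  have other: "tp y z = y # p" if Exy: "E x y" and yy0: "y \<noteq> y0" for y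
  proof -
    have yV: "y \<in> V" using EV Exy by blast
    have ynot: "y \<notin> set p"
    proof
      assume "y \<in> set p"
      then obtain j where j: "j < length p" "p ! j = y" by (auto simp: in_set_conv_nth)
      have "j \<noteq> 0"
      proof
        assume "j = 0" then have "y = x" using j p0 by simp
        then show False using Exy Eirr by simp
      qed
      moreover have "j \<noteq> 1" using j yy0 unfolding y0_def by auto
      ultimately have j2: "j \<ge> 2" by auto
      have s1: "simple_path E (take (Suc j) p) x y" using sp_take[OF sp j(1)] j by simp
      have s2: "simple_path E [x, y] x y" by (rule spI) (use Exy Eirr in \<open>auto simp: less_Suc_eq\<close>)
      have "take (Suc j) p = [x, y]" using tp_eq[OF x yV s1] tp_eq[OF x yV s2] by simp
      then have "length (take (Suc j) p) = 2" by simp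
      then show False using j j2 by simp
    qed
    have "simple_path E (y # p) y z"
    proof (rule spI)
      show "y # p \<noteq> []" "hd (y # p) = y" "last (y # p) = z" "distinct (y # p)" using pd ynot by auto
      fix i assume i: "Suc i < length (y # p)"
      show "E ((y # p) ! i) ((y # p) ! Suc i)"
      proof (cases i)
        case 0 then show ?thesis using p0 Esym[OF Exy] by simp
      next
        case (Suc k) then show ?thesis using spE[OF sp, of k] i by simp
      qed
    qed
    then show ?thesis using tp_eq yV z by blast
  qed
  show ?thesis
    apply (rule exI[of _ y0])
    using Exy0 t0 pcons other p_def by auto
qed


definition nxt where "nxt x z = (SOME y0. E x y0 \<and> tp x z = x # tp y0 z \<and> (\<forall>y. E x y \<and> y \<noteq> y0 \<longrightarrow> tp y z = y # tp x z))"

lemma nxt: assumes "x \<in> V" "z \<in> V" "x \<noteq> z"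
  shows "E x (nxt x z)" "tp x z = x # tp (nxt x z) z" "\<And>y. E x y \<Longrightarrow> y \<noteq> nxt x z \<Longrightarrow> tp y z = y # tp x z"
proof -
  have "E x (nxt x z) \<and> tp x z = x # tp (nxt x z) z \<and> (\<forall>y. E x y \<and> y \<noteq> nxt x z \<longrightarrow> tp y z = y # tp x z)"
    unfolding nxt_def by (rule someI_ex) (rule nbr_step[OF assms])
  then show "E x (nxt x z)" "tp x z = x # tp (nxt x z) z" "\<And>y. E x y \<Longrightarrow> y \<noteq> nxt x z \<Longrightarrow> tp y z = y # tp x z"
    by blast+
qed

lemma nxtV: "x \<in> V \<Longrightarrow> z \<in> V \<Longrightarrow> x \<noteq> z \<Longrightarrow> nxt x z \<in> V" using nxt(1) EV by blast

lemma dist_nxt: assumes "x \<in> V" "z \<in> V" "x \<noteq> z" shows "td x z = Suc (td (nxt x z) z)"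
proof -
  have "tp (nxt x z) z \<noteq> []" using tp_ne nxtV[OF assms] assms(2) by blast
  then show ?thesis unfolding td_def using nxt(2)[OF assms] by (cases "tp (nxt x z) z") auto
qed

lemma dist_other: assumes "x \<in> V" "z \<in> V" "x \<noteq> z" "E x y" "y \<noteq> nxt x z"
  shows "td y z = Suc (td x z)"
proof -
  have "tp x z \<noteq> []" using tp_ne assms by blast
  then show ?thesis unfolding td_def using nxt(3)[OF assms(1-3) assms(4,5)] by (cases "tp x z") auto
qed

lemma dist_adj: assumes "E y z" shows "td y z = 1"
proof -
  have V: "y \<in> V" "z \<in> V" using EV assms by blast+
  have "simple_path E [y, z] y z" by (rule spI) (use assms Eirr in \<open>auto simp: less_Suc_eq\<close>)
  then have "tp y z = [y, z]" using tp_eq V by blast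
  then show ?thesis by (simp add: td_def)
qed

lemma dist_eq0: "x \<in> V \<Longrightarrow> z \<in> V \<Longrightarrow> td x z = 0 \<Longrightarrow> x = z"
proof (rule ccontr)
  assume "td x z = 0" "x \<in> V" "z \<in> V" "x \<noteq> z"
  then show False using dist_nxt[of x z] by simp
qed

lemma lip: assumes "E x y" "w \<in> V" shows "td x w \<le> Suc (td y w)"
proof -
  have V: "x \<in> V" "y \<in> V" using EV assms by blast+
  show ?thesis
  proof (cases "x = w")
    case True then show ?thesis using dist_self V by simp
  next
    case False
    show ?thesis
    proof (cases "y = nxt x w")
      case True then show ?thesis using dist_nxt[OF V(1) assms(2) False] by simp
    next
      case f2: False then show ?thesis using dist_other[OF V(1) assms(2) False assms(1) f2] by simp
    qed
  qed
qed

lemma adj: assumes "E u v" "w \<in> V"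
  shows "td w u = Suc (td w v) \<or> td w v = Suc (td w u)"
proof -
  have V: "u \<in> V" "v \<in> V" using EV assms by blast+
  have "td u w = Suc (td v w) \<or> td v w = Suc (td u w)"
  proof (cases "u = w")
    case True
    have "td v u = 1" using dist_adj Esym assms(1) by blast
    then show ?thesis using True dist_self[OF V(1)] by simp
  next
    case False
    show ?thesis
    proof (cases "v = nxt u w")
      case True then show ?thesis using dist_nxt[OF V(1) assms(2) False] by simp
    next
      case f2: False then show ?thesis using dist_other[OF V(1) assms(2) False assms(1) f2] by simp
    qed
  qed
  then show ?thesis using dist_sym[OF V(1) assms(2)] dist_sym[OF V(2) assms(2)] by simp
qed

lemma triangle: assumes "x \<in> V" "v \<in> V" "w \<in> V" shows "td x w \<le> td x v + td w v"
  using assms(1)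
proof (induction "td x v" arbitrary: x)
  case 0
  then have "x = v" using dist_eq0[of x v] assms(2) by simp
  then show ?case using dist_sym[OF assms(2,3)] by simp
next
  case (Suc m)
  have xv: "x \<noteq> v"
  proof
    assume "x = v" then show False using dist_self[OF assms(2)] Suc.hyps(2) by simp
  qed
  define y where "y = nxt x v"
  have yV: "y \<in> V" unfolding y_def by (rule nxtV[OF Suc.prems assms(2) xv])
  have Exy: "E x y" unfolding y_def by (rule nxt(1)[OF Suc.prems assms(2) xv])
  have dy: "td x v = Suc (td y v)" unfolding y_def by (rule dist_nxt[OF Suc.prems assms(2) xv])
  have "m = td y v" using dy Suc.hyps(2) by simp
  then have "td y w \<le> td y v + td w v" using Suc.hyps(1) yV by blast
  moreover have "td x w \<le> Suc (td y w)" using lip[OF Exy assms(3)] .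
  ultimately show ?case using dy by simp
qed

definition N where "N x = {y \<in> V. E x y}"
lemma finN: "finite (N x)" using finV unfolding N_def by simp

lemma sigma: assumes x: "x \<in> V" and z: "z \<in> V"
  shows "(\<Sum>y\<in>N x. real (td x z) - real (td y z)) = (if x = z then - real (card (N x)) else 2 - real (card (N x)))"
proof (cases "x = z")
  case True
  have "(\<Sum>y\<in>N x. real (td x z) - real (td y z)) = (\<Sum>y\<in>N x. -1)"
    by (rule sum.cong) (auto simp: N_def True dist_self[OF z] dist_adj[OF Esym])
  then show ?thesis using True by simp
next
  case False
  define y0 where "y0 = nxt x z"
  have y0: "y0 \<in> N x" using nxt(1)[OF x z False] nxtV[OF x z False] unfolding N_def y0_def by blast
  have "(\<Sum>y\<in>N x. real (td x z) - real (td y z)) =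
      (real (td x z) - real (td y0 z)) + (\<Sum>y\<in>N x - {y0}. real (td x z) - real (td y z))"
    using y0 finN by (simp add: sum.remove)
  also have "(\<Sum>y\<in>N x - {y0}. real (td x z) - real (td y z)) = (\<Sum>y\<in>N x - {y0}. -1)"
    by (rule sum.cong) (auto simp: N_def y0_def dist_other[OF x z False])
  also have "real (td x z) - real (td y0 z) = 1" using dist_nxt[OF x z False] unfolding y0_def by simp
  finally have eq: "(\<Sum>y\<in>N x. real (td x z) - real (td y z)) = 1 - real (card (N x - {y0}))" by simp
  have "N x \<noteq> {}" using y0 by blast
  then have c: "card (N x) \<ge> 1" using finN[of x] by (simp add: card_gt_0_iff Suc_le_eq)
  show ?thesis using eq False c y0 finN[of x] by (simp add: card_Diff_singleton of_nat_diff)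
qed

definition par where "par x = nxt x r"

lemma pair: assumes "E w y" shows "(w \<noteq> r \<and> y = par w) \<or> (y \<noteq> r \<and> w = par y)"
proof -
  have V: "w \<in> V" "y \<in> V" using EV assms by blast+
  have rr: "tp r r = [r]" using tp_self rV by blast
  show ?thesis
  proof (cases "w \<noteq> r \<and> y = par w")
    case True then show ?thesis by blast
  next
    case False
    have t: "tp y r = y # tp w r"
    proof (cases "w = r")
      case True
      have yr: "y \<noteq> r" using assms Eirr True by blast
      have Eyw: "E y w" using Esym assms by blast
      have "tp y r = y # tp (nxt y r) r" using nxt(2)[OF V(2) rV yr] .
      show ?thesis
      proof (cases "w = nxt y r")
        case True then show ?thesis using nxt(2)[OF V(2) rV yr] by simp
      next
        case False
        then have "tp w r = w # tp y r" using nxt(3)[OF V(2) rV yr Eyw] by simp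
        then show ?thesis using rr \<open>w = r\<close> tp_ne[OF V(2) rV] by simp
      qed
    next
      case wr: False
      then have "y \<noteq> nxt w r" using False unfolding par_def by blast
      then show ?thesis using nxt(3)[OF V(1) rV wr assms] by simp
    qed
    have yr: "y \<noteq> r" using t rr tp_ne[OF V(1) rV] by auto
    have "tp y r = y # tp (nxt y r) r" using nxt(2)[OF V(2) rV yr] .
    then have "tp (nxt y r) r = tp w r" using t by simp
    then have "hd (tp (nxt y r) r) = hd (tp w r)" by simp
    then have "nxt y r = w" using spD[OF tp[OF nxtV[OF V(2) rV yr] rV]] spD[OF tp[OF V(1) rV]] by simp
    then show ?thesis using yr unfolding par_def by (intro disjI2) simp
  qed
qed

lemma par: "x \<in> V \<Longrightarrow> x \<noteq> r \<Longrightarrow> E x (par x) \<and> par x \<in> V \<and> tp x r = x # tp (par x) r \<and> td x r = Suc (td (par x) r)"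
  unfolding par_def using nxt(1,2)[OF _ rV] nxtV[OF _ rV] dist_nxt[OF _ rV] by simp


definition deg where "deg x = real (card (N x)) + (if x = r then 2 else 0)"
definition ES where "ES g x = (\<Sum>y\<in>N x. g y) + (if x = r then 2 * g r else 0)"
definition ind where "ind S x = (if x \<in> S then 1 else 0 :: real)"

lemma NV: "N x \<subseteq> V" unfolding N_def by blast

lemma deg_pos: assumes "x \<in> V" shows "deg x > 0"
proof (cases "x = r")
  case True then show ?thesis unfolding deg_def by simp
next
  case False
  then have "par x \<in> N x" using par[OF assms False] unfolding N_def by blast
  then have "N x \<noteq> {}" by blast
  then have "card (N x) > 0" using finN by (simp add: card_gt_0_iff)
  then show ?thesis unfolding deg_def by simp
qed

lemma ES_diff: "deg x * g x - ES g x = (\<Sum>y\<in>N x. g x - g y)"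
  unfolding deg_def ES_def by (simp add: sum_subtractf algebra_simps)

lemma ES_lin: "ES (\<lambda>a. c + g a) x = c * deg x + ES g x"
  unfolding deg_def ES_def by (simp add: sum.distrib algebra_simps)

lemma ES_mono: fixes g h :: "'a \<Rightarrow> real" assumes "\<And>y. y \<in> V \<Longrightarrow> g y \<le> h y" "x \<in> V" shows "ES g x \<le> ES h x"
proof -
  have "(\<Sum>y\<in>N x. g y) \<le> (\<Sum>y\<in>N x. h y)" by (rule sum_mono) (use assms(1) NV in blast)
  moreover have "g r \<le> h r" using assms(1) rV .
  ultimately show ?thesis unfolding ES_def by auto
qed

lemma EE_eq: "edge_ends V E r x = mset_set (N x) + (if x = r then {#r, r#} else {#})"
  unfolding edge_ends_def N_def by simp

lemma EE_ne: "x \<in> V \<Longrightarrow> edge_ends V E r x \<noteq> {#}"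
  using deg_pos[of x] finN[of x] unfolding EE_eq deg_def by (cases "x = r") (auto simp: mset_set_empty_iff)

lemma EE_set: "set_mset (edge_ends V E r x) \<subseteq> V"
  unfolding EE_eq using finN NV rV by auto

lemma step_set: "x \<in> V \<Longrightarrow> set_pmf (srw_step V E r x) \<subseteq> V"
  unfolding srw_step_def using EE_ne EE_set by simp

lemma E_step: assumes x: "x \<in> V"
  shows "measure_pmf.expectation (srw_step V E r x) g = ES g x / deg x"
proof -
  let ?M = "edge_ends V E r x"
  have ne: "?M \<noteq> {#}" using EE_ne x .
  have sz: "real (size ?M) = deg x" unfolding EE_eq deg_def using finN by simp
  have cnt: "real (count ?M y) = (if y \<in> N x then 1 else 0) + (if x = r \<and> y = r then 2 else 0)" for y
    unfolding EE_eq using finN by auto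
  have "measure_pmf.expectation (srw_step V E r x) g = (\<Sum>y\<in>V. pmf (srw_step V E r x) y *\<^sub>R g y)"
    by (rule integral_measure_pmf[OF finV]) (use step_set[OF x] in blast)
  also have "\<dots> = (\<Sum>y\<in>V. ((if y \<in> N x then g y else 0) + (if x = r \<and> y = r then 2 * g y else 0)) / deg x)"
    unfolding srw_step_def using ne sz
    by (intro sum.cong refl) (simp add: cnt divide_simps)
  also have "\<dots> = ((\<Sum>y\<in>V. if y \<in> N x then g y else 0) + (\<Sum>y\<in>V. if x = r \<and> y = r then 2 * g y else 0)) / deg x"
    by (simp add: sum_divide_distrib[symmetric] sum.distrib)
  also have "(\<Sum>y\<in>V. if y \<in> N x then g y else 0) = (\<Sum>y\<in>N x. g y)"
    using sum.inter_restrict[OF finV, of g "N x"] NV by (simp add: Int_absorb1)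
  also have "(\<Sum>y\<in>V. if x = r \<and> y = r then 2 * g y else 0) = (if x = r then 2 * g r else 0)"
    using finV rV by (cases "x = r") (simp_all add: sum.delta)
  finally show ?thesis unfolding ES_def .
qed

definition cnt where "cnt S p = real (length (filter (\<lambda>w. w \<in> S) p))"
definition NT where "NT S t x = measure_pmf.expectation (srw_traj V E r t x) (cnt S)"

lemma traj_fin: "x \<in> V \<Longrightarrow> finite (set_pmf (srw_traj V E r t x))"
proof (induction t arbitrary: x)
  case 0 then show ?case by simp
next
  case (Suc t)
  have "finite (set_pmf (srw_step V E r x))" using step_set[OF Suc.prems] finV finite_subset by blast
  moreover have "\<And>y. y \<in> set_pmf (srw_step V E r x) \<Longrightarrow> finite (set_pmf (srw_traj V E r t y))"
    using Suc.IH step_set[OF Suc.prems] by blast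
  ultimately show ?case by simp
qed

lemma NT0: "NT S 0 x = ind S x" unfolding NT_def cnt_def ind_def by simp

lemma NT_Suc: assumes x: "x \<in> V"
  shows "NT S (Suc t) x = ES (\<lambda>a. ind S x + NT S t a) x / deg x"
proof -
  have "NT S (Suc t) x = (\<Sum>a\<in>V. pmf (srw_step V E r x) a *\<^sub>R
      measure_pmf.expectation (map_pmf (\<lambda>p. x # p) (srw_traj V E r t a)) (cnt S))"
    unfolding NT_def srw_traj.simps
    by (rule pmf_expectation_bind[OF finV _ step_set[OF x]]) (simp add: traj_fin)
  also have "\<dots> = (\<Sum>a\<in>V. pmf (srw_step V E r x) a *\<^sub>R (ind S x + NT S t a))"
  proof (intro sum.cong refl)
    fix a assume a: "a \<in> V"
    have "measure_pmf.expectation (map_pmf (\<lambda>p. x # p) (srw_traj V E r t a)) (cnt S)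
        = measure_pmf.expectation (srw_traj V E r t a) (\<lambda>p. ind S x + cnt S p)"
      by (simp add: cnt_def ind_def)
    also have "\<dots> = ind S x + NT S t a"
      unfolding NT_def
      by (subst Bochner_Integration.integral_add) (simp_all add: integrable_measure_pmf_finite traj_fin[OF a])
    finally show "pmf (srw_step V E r x) a *\<^sub>R measure_pmf.expectation (map_pmf (\<lambda>p. x # p) (srw_traj V E r t a)) (cnt S)
        = pmf (srw_step V E r x) a *\<^sub>R (ind S x + NT S t a)" by simp
  qed
  also have "\<dots> = measure_pmf.expectation (srw_step V E r x) (\<lambda>a. ind S x + NT S t a)"
    by (rule integral_measure_pmf[OF finV, symmetric]) (use step_set[OF x] in blast)
  finally show ?thesis using E_step[OF x] by simp
qed

lemma potential:
  fixes f :: "'a \<Rightarrow> real"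
  assumes fL: "\<And>x. x \<in> V \<Longrightarrow> L \<le> f x"
    and drift: "\<And>x. x \<in> V \<Longrightarrow> ES f x \<le> deg x * (f x - ind S x + A)"
  shows "x \<in> V \<Longrightarrow> NT S t x \<le> (real t + 1) * A + f x - L"
proof (induction t arbitrary: x)
  case 0
  have "deg x * L \<le> ES f x"
  proof -
    have "ES (\<lambda>a. L) x \<le> ES f x" using ES_mono[of "\<lambda>a. L" f x] fL 0 by simp
    moreover have "ES (\<lambda>a. L) x = deg x * L" by (simp add: ES_def deg_def algebra_simps)
    ultimately show ?thesis by simp
  qed
  then have "deg x * L \<le> deg x * (f x - ind S x + A)" using drift[OF 0] by linarith
  then have "L \<le> f x - ind S x + A" using deg_pos[OF 0] by simp
  then show ?case using NT0[of S x] by simp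
next
  case (Suc t)
  have "ES (\<lambda>a. ind S x + NT S t a) x \<le> ES (\<lambda>a. (ind S x + (real t + 1) * A - L) + f a) x"
  proof (rule ES_mono)
    fix y assume "y \<in> V"
    from Suc.IH[OF this] show "ind S x + NT S t y \<le> ind S x + (real t + 1) * A - L + f y" by linarith
  qed (rule Suc.prems)
  also have "\<dots> = (ind S x + (real t + 1) * A - L) * deg x + ES f x" by (rule ES_lin)
  also have "\<dots> \<le> (ind S x + (real t + 1) * A - L) * deg x + deg x * (f x - ind S x + A)"
    using drift[OF Suc.prems] by simp
  finally have "ES (\<lambda>a. ind S x + NT S t a) x / deg x \<le> (real (Suc t) + 1) * A + f x - L"
    using deg_pos[OF Suc.prems] by (simp add: divide_simps algebra_simps)
  then show ?case using NT_Suc[OF Suc.prems] by simp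
qed


lemma sumN_V: "(\<Sum>w\<in>V. real (card (N w))) = 2 * (real (card V) - 1)"
proof -
  let ?P1 = "(\<lambda>w. (w, par w)) ` (V - {r})" and ?P2 = "(\<lambda>w. (par w, w)) ` (V - {r})"
  have eq: "Sigma V N = ?P1 \<union> ?P2"
  proof
    show "Sigma V N \<subseteq> ?P1 \<union> ?P2"
    proof
      fix q assume "q \<in> Sigma V N"
      then obtain w y where q: "q = (w, y)" "w \<in> V" "E w y" unfolding N_def by blast
      have yV: "y \<in> V" using EV q(3) by blast
      from pair[OF q(3)] show "q \<in> ?P1 \<union> ?P2"
      proof
        assume "w \<noteq> r \<and> y = par w" then show ?thesis using q by blast
      next
        assume "y \<noteq> r \<and> w = par y" then show ?thesis using q yV by blast
      qed
    qed
  next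
    show "?P1 \<union> ?P2 \<subseteq> Sigma V N"
    proof
      fix q assume "q \<in> ?P1 \<union> ?P2"
      then obtain w where w: "w \<in> V" "w \<noteq> r" "q = (w, par w) \<or> q = (par w, w)" by blast
      have p: "E w (par w)" "par w \<in> V" using par[OF w(1,2)] by blast+
      have "E (par w) w" using Esym p(1) by blast
      then show "q \<in> Sigma V N" using w p unfolding N_def by blast
    qed
  qed
  have i1: "inj_on (\<lambda>w. (w, par w)) (V - {r})" by (rule inj_onI) simp
  have i2: "inj_on (\<lambda>w. (par w, w)) (V - {r})" by (rule inj_onI) simp
  have disj: "?P1 \<inter> ?P2 = {}"
  proof (rule ccontr)
    assume "?P1 \<inter> ?P2 \<noteq> {}"
    then obtain w y where w: "w \<in> V" "w \<noteq> r" "y \<in> V" "y \<noteq> r" "w = par y" "par w = y" by auto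
    have "td w r = Suc (td y r)" using par[OF w(1,2)] w(6) by simp
    moreover have "td y r = Suc (td w r)" using par[OF w(3,4)] w(5) by simp
    ultimately show False by simp
  qed
  have cV: "card (V - {r}) = card V - 1" using rV finV by simp
  have "card (Sigma V N) = 2 * (card V - 1)"
    unfolding eq using finV disj card_image[OF i1] card_image[OF i2] cV
    by (subst card_Un_disjoint) auto
  moreover have "card (Sigma V N) = (\<Sum>w\<in>V. card (N w))"
    using finV finN by (simp add: card_SigmaI)
  moreover have "card V \<ge> 1" using rV finV card_0_eq by (metis One_nat_def Suc_leI empty_iff gr0I)
  ultimately show ?thesis by (simp add: of_nat_diff flip: of_nat_sum)
qed

lemma D_eq: "(\<Sum>w\<in>V. deg w) = 2 * real (card V)"
proof -
  have "(\<Sum>w\<in>V. deg w) = (\<Sum>w\<in>V. real (card (N w))) + (\<Sum>w\<in>V. if w = r then 2 else 0)"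
    unfolding deg_def by (simp add: sum.distrib)
  also have "(\<Sum>w\<in>V. if w = r then 2 else 0) = (2::real)" using finV rV by (simp add: sum.delta)
  finally show ?thesis using sumN_V by simp
qed

end

locale tv = tr +
  fixes v assumes vV: "v \<in> V" and vr: "v \<noteq> r"
begin

definition SS where "SS = subtree V E r v"

lemma S_iff: "w \<in> SS \<longleftrightarrow> w \<in> V \<and> v \<in> set (tp w r)"
proof
  assume "w \<in> SS"
  then have "w \<in> V" "\<forall>p. simple_path E p w r \<longrightarrow> v \<in> set p" unfolding SS_def subtree_def by auto
  then show "w \<in> V \<and> v \<in> set (tp w r)" using tp rV by blast
next
  assume a: "w \<in> V \<and> v \<in> set (tp w r)"
  have "\<forall>p. simple_path E p w r \<longrightarrow> v \<in> set p"
  proof (intro allI impI)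
    fix p assume "simple_path E p w r"
    then have "tp w r = p" using tp_eq a rV by blast
    then show "v \<in> set p" using a by simp
  qed
  then show "w \<in> SS" using a unfolding SS_def subtree_def by auto
qed

lemma SV: "SS \<subseteq> V" using S_iff by blast
lemma finS: "finite SS" using SV finV finite_subset by blast
lemma rnS: "r \<notin> SS" using S_iff tp_self[OF rV] vr by simp
lemma vS: "v \<in> SS"
proof -
  have "hd (tp v r) = v" "tp v r \<noteq> []" using spD[OF tp[OF vV rV]] by auto
  then have "v \<in> set (tp v r)" by (metis list.set_sel(1))
  then show ?thesis using S_iff vV by blast
qed

lemma Sa: assumes "y \<in> V" "y \<noteq> r" shows "y \<in> SS \<longleftrightarrow> y = v \<or> par y \<in> SS"
  using par[OF assms] S_iff assms(1) by auto

definition u where "u = par v"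
lemma u: "E v u" "u \<in> V" using par[OF vV vr] unfolding u_def by blast+
lemma unS: "u \<notin> SS"
proof
  assume "u \<in> SS"
  then have "v \<in> set (tp u r)" using S_iff by blast
  moreover have "distinct (tp v r)" using spD[OF tp[OF vV rV]] by blast
  moreover have "tp v r = v # tp u r" using par[OF vV vr] unfolding u_def by blast
  ultimately show False by simp
qed

lemma S1: assumes "x \<in> SS" "x \<noteq> v" "E x y" shows "y \<in> SS"
proof -
  have xV: "x \<in> V" and xr: "x \<noteq> r" using assms(1) SV rnS by blast+
  have yV: "y \<in> V" using EV assms(3) by blast
  from pair[OF assms(3)] show ?thesis
  proof
    assume "x \<noteq> r \<and> y = par x" then show ?thesis using Sa[OF xV xr] assms by blast
  next
    assume "y \<noteq> r \<and> x = par y" then show ?thesis using Sa[OF yV] assms(1) by blast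
  qed
qed

lemma S2: assumes "x \<notin> SS" "E x y" "y \<in> SS" shows "y = v"
  using S1[OF assms(3) _ Esym[OF assms(2)]] assms(1) by blast

lemma S3: assumes "E v y" "y \<noteq> u" shows "y \<in> SS"
proof -
  have yV: "y \<in> V" using EV assms(1) by blast
  from pair[OF assms(1)] show ?thesis
  proof
    assume "v \<noteq> r \<and> y = par v" then show ?thesis using assms(2) unfolding u_def by blast
  next
    assume "y \<noteq> r \<and> v = par y" then show ?thesis using Sa[OF yV] vS by blast
  qed
qed

lemma sumN_S: "(\<Sum>w\<in>SS. real (card (N w))) \<le> 2 * real (card SS) - 1"
proof -
  let ?P1 = "(\<lambda>w. (w, par w)) ` SS" and ?P2 = "(\<lambda>w. (par w, w)) ` (SS - {v})"
  have sub: "Sigma SS N \<subseteq> ?P1 \<union> ?P2"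
  proof
    fix q assume "q \<in> Sigma SS N"
    then obtain w y where q: "q = (w, y)" "w \<in> SS" "E w y" unfolding N_def by blast
    have yV: "y \<in> V" using EV q(3) by blast
    from pair[OF q(3)] show "q \<in> ?P1 \<union> ?P2"
    proof
      assume "w \<noteq> r \<and> y = par w" then show ?thesis using q by blast
    next
      assume a: "y \<noteq> r \<and> w = par y"
      then have "y \<in> SS" using Sa[OF yV] q(2) by blast
      moreover have "y \<noteq> v" using a q(2) unS unfolding u_def by blast
      ultimately show ?thesis using q a by blast
    qed
  qed
  have "card (Sigma SS N) \<le> card ?P1 + card ?P2"
    using card_mono[OF _ sub] card_Un_le[of ?P1 ?P2] finS by (meson finite_Diff finite_UnI finite_imageI le_trans)
  also have "\<dots> \<le> card SS + card (SS - {v})" by (intro add_mono card_image_le) (use finS in auto)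
  also have "card (SS - {v}) = card SS - 1" using vS finS by simp
  finally have c: "card (Sigma SS N) \<le> card SS + (card SS - 1)" .
  have "card (Sigma SS N) = (\<Sum>w\<in>SS. card (N w))"
    using finS finN by (simp add: card_SigmaI)
  moreover have "card SS \<ge> 1" using vS finS card_0_eq by (metis One_nat_def Suc_leI empty_iff gr0I)
  ultimately show ?thesis using c by (simp add: of_nat_diff flip: of_nat_sum)
qed


definition ell where "ell x w = (real (td x v) + real (td w v) - real (td x w)) / 2"
definition Phi where "Phi x = (\<Sum>w\<in>V. deg w * ell x w)"

lemma ell_nonneg: "x \<in> V \<Longrightarrow> w \<in> V \<Longrightarrow> 0 \<le> ell x w"
  unfolding ell_def using triangle[of x v w] vV by simp

lemma ell_le: "x \<in> V \<Longrightarrow> w \<in> V \<Longrightarrow> ell x w \<le> real (card V) - 1"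
proof -
  assume a: "x \<in> V" "w \<in> V"
  have "td x v \<le> card V - 1" "td w v \<le> card V - 1" using dist_le a vV by auto
  moreover have "card V \<ge> 1" using rV finV card_0_eq by (metis One_nat_def Suc_leI empty_iff gr0I)
  ultimately show ?thesis unfolding ell_def by (simp add: of_nat_diff)
qed

lemma deg_nonneg: "x \<in> V \<Longrightarrow> 0 \<le> deg x" using deg_pos by (simp add: less_imp_le)

lemma inner: assumes x: "x \<in> V" and w: "w \<in> V"
  shows "(\<Sum>y\<in>N x. ell x w - ell y w) = (if x = v then (if w = v then 0 else -1) else (if w = x then 1 else 0))"
proof -
  have "(\<Sum>y\<in>N x. ell x w - ell y w) = (\<Sum>y\<in>N x. ((real (td x v) - real (td y v)) - (real (td x w) - real (td y w))) / 2)"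
    by (intro sum.cong refl) (simp add: ell_def field_simps)
  also have "\<dots> = ((\<Sum>y\<in>N x. real (td x v) - real (td y v)) - (\<Sum>y\<in>N x. real (td x w) - real (td y w))) / 2"
    by (simp add: sum_divide_distrib[symmetric] sum_subtractf)
  also have "\<dots> = (if x = v then (if w = v then 0 else -1) else (if w = x then 1 else 0))"
    using sigma[OF x vV] sigma[OF x w] by auto
  finally show ?thesis .
qed

lemma Phi_diff: assumes x: "x \<in> V"
  shows "(\<Sum>y\<in>N x. Phi x - Phi y) = (if x = v then - (2 * real (card V) - deg v) else deg x)"
proof -
  have "(\<Sum>y\<in>N x. Phi x - Phi y) = (\<Sum>y\<in>N x. \<Sum>w\<in>V. deg w * (ell x w - ell y w))"
    unfolding Phi_def by (simp add: sum_subtractf[symmetric] right_diff_distrib)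
  also have "\<dots> = (\<Sum>w\<in>V. deg w * (\<Sum>y\<in>N x. ell x w - ell y w))"
    by (subst sum.swap) (simp add: sum_distrib_left)
  also have "\<dots> = (\<Sum>w\<in>V. deg w * (if x = v then (if w = v then 0 else -1) else (if w = x then 1 else 0)))"
    by (intro sum.cong refl) (simp add: inner[OF x])
  also have "\<dots> = (if x = v then - (2 * real (card V) - deg v) else deg x)"
  proof (cases "x = v")
    case True
    have "(\<Sum>w\<in>V. deg w * (if w = v then 0 else -1)) = (\<Sum>w\<in>V. - (if w \<in> V - {v} then deg w else 0))"
      by (intro sum.cong refl) auto
    also have "\<dots> = - (\<Sum>w\<in>V. (if w \<in> V - {v} then deg w else 0))" by (simp add: sum_negf)
    also have "(\<Sum>w\<in>V. (if w \<in> V - {v} then deg w else 0)) = (\<Sum>w\<in>V - {v}. deg w)"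
      using sum.inter_restrict[OF finV, of deg "V - {v}"] by (simp add: Int_absorb1)
    finally have "(\<Sum>w\<in>V. deg w * (if w = v then 0 else -1)) = - (\<Sum>w\<in>V - {v}. deg w)" .
    also have "(\<Sum>w\<in>V - {v}. deg w) = 2 * real (card V) - deg v"
      using D_eq vV finV by (simp add: sum_diff1)
    finally show ?thesis using True by simp
  next
    case False
    have "(\<Sum>w\<in>V. deg w * (if w = x then 1 else 0)) = deg x"
      using finV x by (simp add: sum.delta' if_distrib cong: if_cong)
    then show ?thesis using False by simp
  qed
  finally show ?thesis .
qed

lemma Phi_v: "Phi v = 0"
  unfolding Phi_def ell_def using dist_sym vV by (simp add: dist_self[OF vV])

lemma Phi_nonneg: "x \<in> V \<Longrightarrow> 0 \<le> Phi x"
  unfolding Phi_def by (intro sum_nonneg mult_nonneg_nonneg deg_nonneg ell_nonneg)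

lemma Phi_le: assumes "x \<in> V" shows "Phi x \<le> 2 * real (card V) * (real (card V) - 1)"
proof -
  have "Phi x \<le> (\<Sum>w\<in>V. deg w * (real (card V) - 1))"
    unfolding Phi_def by (intro sum_mono mult_left_mono ell_le deg_nonneg assms)
  also have "\<dots> = 2 * real (card V) * (real (card V) - 1)" using D_eq by (simp add: sum_distrib_right[symmetric])
  finally show ?thesis .
qed

lemma u_claim: "w \<in> V \<Longrightarrow> td w u = Suc (td w v) \<Longrightarrow> w \<in> SS"
proof (induction "td w v" arbitrary: w)
  case 0
  then have "w = v" using dist_eq0[of w v] vV by simp
  then show ?case using vS by simp
next
  case (Suc m)
  have wv: "w \<noteq> v"
  proof
    assume "w = v" then show False using dist_self[OF vV] Suc.hyps(2) by simp
  qed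
  define w' where "w' = nxt w v"
  have w'V: "w' \<in> V" unfolding w'_def by (rule nxtV[OF Suc.prems(1) vV wv])
  have Ew: "E w w'" unfolding w'_def by (rule nxt(1)[OF Suc.prems(1) vV wv])
  have dw: "td w v = Suc (td w' v)" unfolding w'_def by (rule dist_nxt[OF Suc.prems(1) vV wv])
  have l: "td w u \<le> Suc (td w' u)" using lip[OF Ew u(2)] .
  have a: "td w' u = Suc (td w' v) \<or> td w' v = Suc (td w' u)" using adj[OF Esym[OF u(1)] w'V] .
  have d': "td w' u = Suc (td w' v)" using l a dw Suc.prems(2) by linarith
  have "m = td w' v" using dw Suc.hyps(2) by simp
  then have w'S: "w' \<in> SS" using Suc.hyps(1) w'V d' by blast
  show ?case
  proof (cases "w' = v")
    case False show ?thesis by (rule S1[OF w'S False Esym[OF Ew]])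
  next
    case True
    have "w \<noteq> u"
    proof
      assume "w = u" then show False using Suc.prems(2) dist_self[OF u(2)] by simp
    qed
    then show ?thesis using S3 True Esym[OF Ew] by blast
  qed
qed

lemma ell_u: assumes "w \<in> V" "w \<notin> SS" shows "ell u w = 1"
proof -
  have "td w u \<noteq> Suc (td w v)" using u_claim assms by blast
  then have "td w v = Suc (td w u)" using adj[OF Esym[OF u(1)] assms(1)] by blast
  moreover have "td u v = 1" using dist_adj Esym[OF u(1)] by blast
  moreover have "td u w = td w u" using dist_sym[OF assms(1) u(2)] .
  ultimately show ?thesis unfolding ell_def by simp
qed

lemma Phi_u: "Phi u \<ge> 2 * real (card V) - (2 * real (card SS) - 1)"
proof -
  have "(\<Sum>w\<in>V - SS. deg w) = (\<Sum>w\<in>V - SS. deg w * ell u w)"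
    by (intro sum.cong refl) (simp add: ell_u)
  also have "\<dots> \<le> Phi u" unfolding Phi_def
    by (rule sum_mono2[OF finV]) (auto intro!: mult_nonneg_nonneg deg_nonneg ell_nonneg u(2))
  finally have 1: "(\<Sum>w\<in>V - SS. deg w) \<le> Phi u" .
  have "(\<Sum>w\<in>V - SS. deg w) = 2 * real (card V) - (\<Sum>w\<in>SS. deg w)"
    using D_eq SV finV by (simp add: sum_diff)
  moreover have "(\<Sum>w\<in>SS. deg w) = (\<Sum>w\<in>SS. real (card (N w)))"
    unfolding deg_def using rnS by (intro sum.cong refl) auto
  ultimately show ?thesis using 1 sumN_S by linarith
qed

definition A where "A = real (card SS) / (real (card V) - 1)"
definition ff where "ff x = (ind SS x - A) * Phi x"

lemma kn: "card SS \<ge> 1" "card SS \<le> card V - 1" "card V \<ge> 2"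
proof -
  show k1: "card SS \<ge> 1" using vS finS card_0_eq by (metis One_nat_def Suc_leI empty_iff gr0I)
  have "SS \<subseteq> V - {r}" using SV rnS by blast
  then have "card SS \<le> card (V - {r})" using finV by (intro card_mono) auto
  then show k2: "card SS \<le> card V - 1" using rV finV by simp
  show "card V \<ge> 2" using k1 k2 by linarith
qed

lemma A_props: "0 \<le> A" "A \<le> 1" "2 * real (card SS) - 1 \<le> A * (2 * real (card V))"
proof -
  have n: "real (card V) - 1 > 0" using kn(3) by simp
  have k: "real (card SS) \<le> real (card V) - 1" using kn(2,3) by (simp add: of_nat_diff)
  show "0 \<le> A" unfolding A_def using n by simp
  show "A \<le> 1" unfolding A_def using n k by simp
  have "2 * real (card SS) * (real (card V) - 1) \<le> real (card SS) * (2 * real (card V))"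
    by (simp add: algebra_simps)
  then have "2 * real (card SS) \<le> A * (2 * real (card V))" unfolding A_def using n
    by (simp add: divide_simps)
  then show "2 * real (card SS) - 1 \<le> A * (2 * real (card V))" by simp
qed

lemma drift: assumes x: "x \<in> V" shows "ES ff x \<le> deg x * (ff x - ind SS x + A)"
proof -
  have key: "deg x * (ind SS x - A) \<le> (\<Sum>y\<in>N x. ff x - ff y)"
  proof (cases "x = v")
    case True
    have dv: "deg v = real (card (N v))" unfolding deg_def using vr by simp
    have uN: "u \<in> N v" using u unfolding N_def by blast
    have fy: "ff y = (1 - A) * Phi y - (if y = u then Phi u else 0)" if "y \<in> N v" for y
    proof (cases "y = u")
      case True then show ?thesis unfolding ff_def ind_def using unS by (simp add: algebra_simps)
    next
      case False
      then have "y \<in> SS" using S3 that unfolding N_def by blast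
      then show ?thesis unfolding ff_def ind_def using False by simp
    qed
    have sumPhi: "(\<Sum>y\<in>N v. Phi y) = 2 * real (card V) - deg v"
      using Phi_diff[OF vV] Phi_v by (simp add: sum_negf)
    have "(\<Sum>y\<in>N v. ff v - ff y) = - (\<Sum>y\<in>N v. ff y)"
      using Phi_v unfolding ff_def by (simp add: sum_negf)
    also have "(\<Sum>y\<in>N v. ff y) = (\<Sum>y\<in>N v. (1 - A) * Phi y - (if y = u then Phi u else 0))"
      by (intro sum.cong refl fy)
    also have "\<dots> = (1 - A) * (2 * real (card V) - deg v) - Phi u"
      using uN finN by (simp add: sum_subtractf sum_distrib_left[symmetric] sumPhi)
    finally have eq: "(\<Sum>y\<in>N v. ff v - ff y) = Phi u - (1 - A) * (2 * real (card V) - deg v)" by simp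
    have "(1 - A) * (2 * real (card V)) \<le> Phi u" using Phi_u A_props(3) by (simp add: algebra_simps)
    then have "deg v * (1 - A) \<le> (\<Sum>y\<in>N v. ff v - ff y)" unfolding eq by (simp add: algebra_simps)
    then show ?thesis using True vS unfolding ind_def by simp
  next
    case False
    show ?thesis
    proof (cases "x \<in> SS")
      case True
      have "(\<Sum>y\<in>N x. ff x - ff y) = (\<Sum>y\<in>N x. (1 - A) * (Phi x - Phi y))"
      proof (intro sum.cong refl)
        fix y assume "y \<in> N x"
        then have "y \<in> SS" using S1[OF True False] unfolding N_def by blast
        then show "ff x - ff y = (1 - A) * (Phi x - Phi y)" using True unfolding ff_def ind_def
          by (simp add: algebra_simps)
      qed
      also have "\<dots> = (1 - A) * deg x" using Phi_diff[OF x] False by (simp add: sum_distrib_left[symmetric])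
      finally show ?thesis using True unfolding ind_def by (simp add: algebra_simps)
    next
      case nS: False
      have "(\<Sum>y\<in>N x. ff x - ff y) = (\<Sum>y\<in>N x. (- A) * (Phi x - Phi y))"
      proof (intro sum.cong refl)
        fix y assume y: "y \<in> N x"
        have "ff y = - A * Phi y"
        proof (cases "y \<in> SS")
          case True
          then have "y = v" using S2[OF nS] y unfolding N_def by blast
          then show ?thesis unfolding ff_def using Phi_v by simp
        next
          case False then show ?thesis unfolding ff_def ind_def by simp
        qed
        moreover have "ff x = - A * Phi x" unfolding ff_def ind_def using nS by simp
        ultimately show "ff x - ff y = (- A) * (Phi x - Phi y)" by (simp add: algebra_simps)
      qed
      also have "\<dots> = (- A) * deg x" using Phi_diff[OF x] False by (simp add: sum_negf sum_distrib_left[symmetric])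
      finally show ?thesis using nS unfolding ind_def by (simp add: algebra_simps)
    qed
  qed
  have "ES ff x = deg x * ff x - (\<Sum>y\<in>N x. ff x - ff y)" using ES_diff[of x ff] by simp
  then show ?thesis using key by (simp add: algebra_simps)
qed

lemma ff_lower: assumes x: "x \<in> V" shows "- (2 * real (card V) * real (card SS)) \<le> ff x"
proof (cases "x \<in> SS")
  case True
  then have "ff x = (1 - A) * Phi x" unfolding ff_def ind_def by simp
  moreover have "0 \<le> (1 - A) * Phi x" using A_props(2) Phi_nonneg[OF x] by simp
  moreover have "0 \<le> 2 * real (card V) * real (card SS)" by simp
  ultimately show ?thesis by linarith
next
  case False
  then have fx: "ff x = - (A * Phi x)" unfolding ff_def ind_def by simp
  have "A * Phi x \<le> A * (2 * real (card V) * (real (card V) - 1))"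
    using Phi_le[OF x] A_props(1) by (rule mult_left_mono)
  also have "\<dots> = 2 * real (card V) * real (card SS)"
    unfolding A_def using kn(3) by (simp add: divide_simps)
  finally show ?thesis using fx by simp
qed

lemma main_tv: "NT SS t v \<le> real (card SS) * ((real t + 3) / (real (card V) - 1) + 48 * real (card V))"
proof -
  have "NT SS t v \<le> (real t + 1) * A + ff v - (- (2 * real (card V) * real (card SS)))"
    by (rule potential[OF ff_lower drift vV])
  also have "ff v = 0" unfolding ff_def using Phi_v by simp
  also have "(real t + 1) * A \<le> (real t + 3) * A" using A_props(1) by (simp add: mult_right_mono)
  finally have 1: "NT SS t v \<le> (real t + 3) * A + 2 * real (card V) * real (card SS)" by simp
  have 2: "2 * real (card V) * real (card SS) \<le> 48 * real (card V) * real (card SS)" by simp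
  have 3: "real (card SS) * ((real t + 3) / (real (card V) - 1)) = (real t + 3) * A" unfolding A_def by simp
  have "real (card SS) * ((real t + 3) / (real (card V) - 1) + 48 * real (card V))
     = (real t + 3) * A + 48 * real (card V) * real (card SS)" using 3 by (simp add: algebra_simps)
  with 1 2 show ?thesis by linarith
qed

end

lemma (in tr) NT_le: "x \<in> V \<Longrightarrow> NT S t x \<le> real t + 1"
proof -
  assume x: "x \<in> V"
  have "NT S t x \<le> (real t + 1) * 1 + (\<lambda>_. 0::real) x - 0"
  proof (rule potential)
    fix y assume "y \<in> V"
    show "ES (\<lambda>_. 0) y \<le> deg y * (0 - ind S y + 1)"
      using deg_pos[OF \<open>y \<in> V\<close>] deg_pos[OF rV] unfolding ES_def ind_def by simp
  qed (use x in simp_all)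
  then show ?thesis by simp
qed

theorem corollary5p5:
  fixes V :: "'a set" and E :: "'a \<Rightarrow> 'a \<Rightarrow> bool" and r v :: 'a and t :: nat
  assumes "is_tree V E" and "r \<in> V" and "card V \<ge> 2" and "v \<in> V"
  shows "expected_visits V E r v t
           \<le> real (card (subtree V E r v)) *
              ((real t + 3) / (real (card V) - 1) + 48 * real (card V))"
proof -
  interpret tr V E r using assms(1,2) by unfold_locales
  have ev: "expected_visits V E r v t = NT (subtree V E r v) t v"
    unfolding expected_visits_def NT_def cnt_def by simp
  show ?thesis
  proof (cases "v = r")
    case False
    interpret tv V E r v using assms(4) False by unfold_locales
    show ?thesis using main_tv unfolding ev SS_def .
  next
    case True
    have "subtree V E r v = V"
    proof
      show "subtree V E r v \<subseteq> V" unfolding subtree_def by blast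
      show "V \<subseteq> subtree V E r v"
      proof
        fix w assume w: "w \<in> V"
        have "\<forall>p. simple_path E p w r \<longrightarrow> v \<in> set p"
        proof (intro allI impI)
          fix p assume "simple_path E p w r"
          then have "p \<noteq> []" "last p = r" using spD by blast+
          then show "v \<in> set p" using True by (metis last_in_set)
        qed
        then show "w \<in> subtree V E r v" unfolding subtree_def using w by blast
      qed
    qed
    then have cs: "card (subtree V E r v) = card V" by simp
    have n: "real (card V) - 1 > 0" using assms(3) by simp
    have "real t + 1 \<le> real (card V) * ((real t + 3) / (real (card V) - 1))"
    proof -
      have "(real t + 1) * (real (card V) - 1) \<le> real (card V) * (real t + 3)" by (simp add: algebra_simps)
      then show ?thesis using n by (simp add: divide_simps)
    qed
    also have "\<dots> \<le> real (card V) * ((real t + 3) / (real (card V) - 1) + 48 * real (card V))"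
      by (simp add: algebra_simps)
    finally show ?thesis using NT_le[OF assms(4), of "subtree V E r v" t] ev cs by simp
  qed
qed

end
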